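(* Let $n\ge 2$ be an integer and $A\subseteq L_n$. The subspace $(L_n,\tau(A)|_{L_n})$ of $(X_n,\tau(A))$ is Lindelöf if and only if $L_n\setminus A$ does not contain a closed uncountable subset of $(L_n,\tau_E|_{L_n})$.
   Context: For $\overline{x},\overline{a}\in\mathbb R^n$ let $|\overline{x}-\overline{a}|$ be the Euclidean distance and $B(\overline{a},\epsilon)=\{\overline{x}\in\mathbb R^n:|\overline{x}-\overline{a}|<\epsilon\}$. Let $P_n=\{\overline{x}\in\mathbb R^n: x_n>0\}$, $L_n=\{\overline{x}\in\mathbb R^n: x_n=0\}$, $X_n=P_n\cup L_n$, and let $\tau_E$ denote the Euclidean topology on $X_n$. For $\overline{a}\in L_n$ and $\epsilon>0$ put $\overline{a(\epsilon)}=(a_1,\dots,a_{n-1},\epsilon)$ and $\tilde B(\overline{a},\epsilon)=\{\overline{a}\}\cup B(\overline{a(\epsilon)},\epsilon)$. For $A\subseteq L_n$, the topology $\tau(A)$ on $X_n$ is generated by the local bases: at $\overline{a}\in P_n$, the sets $B(\overline{a},\epsilon)$ with $0<\epsilon<a_n$; at $\overline{a}\in A$, the sets $B(\overline{a},\epsilon)\cap X_n$ with $\epsilon>0$; at $\overline{a}\in L_n\setminus A$, the sets $\tilde B(\overline{a},\epsilon)$ with $\epsilon>0$. *)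

theory Defs
  imports "HOL-Analysis.Analysis"
begin

text \<open>Points of R^n are represented as functions nat => real vanishing at indices >= n;
  coordinates x_1..x_n of the paper are x 0 .. x (n-1); the last coordinate x_n is x (n-1).\<close>

definition Rn :: "nat \<Rightarrow> (nat \<Rightarrow> real) set" where
  "Rn n = {x. \<forall>i\<ge>n. x i = 0}"

definition edist :: "nat \<Rightarrow> (nat \<Rightarrow> real) \<Rightarrow> (nat \<Rightarrow> real) \<Rightarrow> real" where
  "edist n x y = sqrt (\<Sum>i<n. (x i - y i)^2)"

definition eball :: "nat \<Rightarrow> (nat \<Rightarrow> real) \<Rightarrow> real \<Rightarrow> (nat \<Rightarrow> real) set" where
  "eball n a e = {x \<in> Rn n. edist n x a < e}"

definition Pn :: "nat \<Rightarrow> (nat \<Rightarrow> real) set" where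
  "Pn n = {x \<in> Rn n. x (n - 1) > 0}"

definition Ln :: "nat \<Rightarrow> (nat \<Rightarrow> real) set" where
  "Ln n = {x \<in> Rn n. x (n - 1) = 0}"

definition Xn :: "nat \<Rightarrow> (nat \<Rightarrow> real) set" where
  "Xn n = Pn n \<union> Ln n"

definition aeps :: "nat \<Rightarrow> (nat \<Rightarrow> real) \<Rightarrow> real \<Rightarrow> (nat \<Rightarrow> real)" where
  "aeps n a e = a((n - 1) := e)"

definition tball :: "nat \<Rightarrow> (nat \<Rightarrow> real) \<Rightarrow> real \<Rightarrow> (nat \<Rightarrow> real) set" where
  "tball n a e = insert a (eball n (aeps n a e) e)"

definition euclRn :: "nat \<Rightarrow> (nat \<Rightarrow> real) topology" where
  "euclRn n = topology (\<lambda>U. U \<subseteq> Rn n \<and> (\<forall>a\<in>U. \<exists>e>0. eball n a e \<subseteq> U))"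

definition tauE :: "nat \<Rightarrow> (nat \<Rightarrow> real) topology" where
  "tauE n = subtopology (euclRn n) (Xn n)"

definition basic_nbhd :: "nat \<Rightarrow> (nat \<Rightarrow> real) set \<Rightarrow> (nat \<Rightarrow> real) \<Rightarrow> real \<Rightarrow> (nat \<Rightarrow> real) set" where
  "basic_nbhd n A a e =
     (if a \<in> Pn n then eball n a e
      else if a \<in> A then eball n a e \<inter> Xn n
      else tball n a e)"

definition tauA :: "nat \<Rightarrow> (nat \<Rightarrow> real) set \<Rightarrow> (nat \<Rightarrow> real) topology" where
  "tauA n A = topology (\<lambda>U. U \<subseteq> Xn n \<and>
      (\<forall>a\<in>U. \<exists>e>0. (a \<in> Pn n \<longrightarrow> e < a (n - 1)) \<and> basic_nbhd n A a e \<subseteq> U))"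

end

theory Submission
  imports Defs
begin

lemma edist_L2: "edist n x y = L2_set (\<lambda>i. x i - y i) {..<n}"
  unfolding edist_def L2_set_def by simp

lemma edist_nonneg: "0 \<le> edist n x y"
  by (simp add: edist_L2)

lemma edist_self: "edist n x x = 0"
  by (simp add: edist_def)

lemma edist_sym: "edist n x y = edist n y x"
  unfolding edist_def by (simp add: power2_commute)

lemma edist_triangle: "edist n x z \<le> edist n x y + edist n y z"
proof -
  have "edist n x z = L2_set (\<lambda>i. (x i - y i) + (y i - z i)) {..<n}"
    by (simp add: edist_L2)
  also have "\<dots> \<le> edist n x y + edist n y z"
    unfolding edist_L2 by (rule L2_set_triangle_ineq)
  finally show ?thesis .
qed

lemma edist_coord: assumes "k < n" shows "\<bar>x k - y k\<bar> \<le> edist n x y"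
proof -
  have "\<bar>x k - y k\<bar> \<le> L2_set (\<lambda>i. \<bar>x i - y i\<bar>) {..<n}"
    by (rule member_le_L2_set) (use assms in auto)
  also have "\<dots> = edist n x y" unfolding edist_L2 L2_set_def by simp
  finally show ?thesis .
qed

lemma edist_aeps: assumes "n \<ge> 1" shows "edist n (aeps n a e1) (aeps n a e2) = \<bar>e1 - e2\<bar>"
proof -
  have "(\<Sum>i<n. (aeps n a e1 i - aeps n a e2 i)^2) = (\<Sum>i\<in>{n-1}. (aeps n a e1 i - aeps n a e2 i)^2)"
    by (rule sum.mono_neutral_right) (use assms in \<open>auto simp: aeps_def\<close>)
  then show ?thesis unfolding edist_def by (simp add: aeps_def)
qed

lemma aeps_Rn: "a \<in> Rn n \<Longrightarrow> n \<ge> 1 \<Longrightarrow> aeps n a e \<in> Rn n"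
  by (auto simp: Rn_def aeps_def)

lemma eball_mono: "e1 \<le> e2 \<Longrightarrow> eball n a e1 \<subseteq> eball n a e2"
  by (auto simp: eball_def)

lemma center_in_eball: "a \<in> Rn n \<Longrightarrow> e > 0 \<Longrightarrow> a \<in> eball n a e"
  by (simp add: eball_def edist_self)

lemma eball_open_pt:
  assumes "x \<in> eball n a e" shows "\<exists>d>0. eball n x d \<subseteq> eball n a e"
proof (intro exI conjI)
  show "e - edist n x a > 0" using assms by (auto simp: eball_def)
  show "eball n x (e - edist n x a) \<subseteq> eball n a e"
  proof
    fix y assume "y \<in> eball n x (e - edist n x a)"
    then have "y \<in> Rn n" "edist n y x < e - edist n x a" by (auto simp: eball_def)
    moreover have "edist n y a \<le> edist n y x + edist n x a" by (rule edist_triangle)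
    ultimately show "y \<in> eball n a e" by (auto simp: eball_def)
  qed
qed

lemma tball_mono: assumes "n \<ge> 1" "0 < e1" "e1 \<le> e2" shows "tball n a e1 \<subseteq> tball n a e2"
proof -
  have "eball n (aeps n a e1) e1 \<subseteq> eball n (aeps n a e2) e2"
  proof
    fix y assume "y \<in> eball n (aeps n a e1) e1"
    then have "y \<in> Rn n" "edist n y (aeps n a e1) < e1" by (auto simp: eball_def)
    moreover have "edist n y (aeps n a e2) \<le> edist n y (aeps n a e1) + edist n (aeps n a e1) (aeps n a e2)"
      by (rule edist_triangle)
    ultimately show "y \<in> eball n (aeps n a e2) e2" using assms edist_aeps[OF assms(1), of a e1 e2]
      by (auto simp: eball_def)
  qed
  then show ?thesis unfolding tball_def by auto
qed

lemma eball_aeps_Pn: assumes "n \<ge> 1" "e > 0" shows "eball n (aeps n a e) e \<subseteq> Pn n"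
proof
  fix y assume y: "y \<in> eball n (aeps n a e) e"
  have "\<bar>y (n-1) - aeps n a e (n-1)\<bar> \<le> edist n y (aeps n a e)"
    by (rule edist_coord) (use assms in auto)
  then show "y \<in> Pn n" using y by (auto simp: eball_def Pn_def aeps_def)
qed

lemma eball_Pn: assumes "n \<ge> 1" "x \<in> Pn n" "e \<le> x (n-1)" shows "eball n x e \<subseteq> Pn n"
proof
  fix y assume y: "y \<in> eball n x e"
  have "\<bar>y (n-1) - x (n-1)\<bar> \<le> edist n y x"
    by (rule edist_coord) (use assms in auto)
  then show "y \<in> Pn n" using y assms by (auto simp: eball_def Pn_def)
qed

lemma Ln_Pn_disj: "Ln n \<inter> Pn n = {}"
  by (auto simp: Ln_def Pn_def)

lemma istopI: "(\<And>S T. P S \<Longrightarrow> P T \<Longrightarrow> P (S \<inter> T)) \<Longrightarrow> (\<And>K. \<forall>U\<in>K. P U \<Longrightarrow> P (\<Union>K)) \<Longrightarrow> istopology P"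
  unfolding istopology_def by blast

lemma basic_nbhd_mono:
  assumes "n \<ge> 1" "0 < e1" "e1 \<le> e2" shows "basic_nbhd n A a e1 \<subseteq> basic_nbhd n A a e2"
  using eball_mono[OF assms(3)] tball_mono[OF assms] unfolding basic_nbhd_def by auto

lemma istop_tauA: assumes "n \<ge> 1"
  shows "istopology (\<lambda>U. U \<subseteq> Xn n \<and>
      (\<forall>a\<in>U. \<exists>e>0. (a \<in> Pn n \<longrightarrow> e < a (n - 1)) \<and> basic_nbhd n A a e \<subseteq> U))"
proof (rule istopI)
  fix S T assume S: "S \<subseteq> Xn n \<and> (\<forall>a\<in>S. \<exists>e>0. (a \<in> Pn n \<longrightarrow> e < a (n - 1)) \<and> basic_nbhd n A a e \<subseteq> S)"
    and T: "T \<subseteq> Xn n \<and> (\<forall>a\<in>T. \<exists>e>0. (a \<in> Pn n \<longrightarrow> e < a (n - 1)) \<and> basic_nbhd n A a e \<subseteq> T)"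
  show "S \<inter> T \<subseteq> Xn n \<and> (\<forall>a\<in>S \<inter> T. \<exists>e>0. (a \<in> Pn n \<longrightarrow> e < a (n - 1)) \<and> basic_nbhd n A a e \<subseteq> S \<inter> T)"
  proof (intro conjI ballI)
    show "S \<inter> T \<subseteq> Xn n" using S by auto
    fix a assume a: "a \<in> S \<inter> T"
    obtain e1 where e1: "e1 > 0" "a \<in> Pn n \<longrightarrow> e1 < a (n - 1)" "basic_nbhd n A a e1 \<subseteq> S" using S a by blast
    obtain e2 where e2: "e2 > 0" "a \<in> Pn n \<longrightarrow> e2 < a (n - 1)" "basic_nbhd n A a e2 \<subseteq> T" using T a by blast
    have "basic_nbhd n A a (min e1 e2) \<subseteq> basic_nbhd n A a e1"
      by (rule basic_nbhd_mono) (use assms e1 e2 in auto)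
    moreover have "basic_nbhd n A a (min e1 e2) \<subseteq> basic_nbhd n A a e2"
      by (rule basic_nbhd_mono) (use assms e1 e2 in auto)
    ultimately show "\<exists>e>0. (a \<in> Pn n \<longrightarrow> e < a (n - 1)) \<and> basic_nbhd n A a e \<subseteq> S \<inter> T"
      using e1 e2 by (intro exI[of _ "min e1 e2"]) auto
  qed
next
  fix K :: "(nat \<Rightarrow> real) set set"
  assume K: "\<forall>U\<in>K. U \<subseteq> Xn n \<and> (\<forall>a\<in>U. \<exists>e>0. (a \<in> Pn n \<longrightarrow> e < a (n - 1)) \<and> basic_nbhd n A a e \<subseteq> U)"
  show "\<Union>K \<subseteq> Xn n \<and> (\<forall>a\<in>\<Union>K. \<exists>e>0. (a \<in> Pn n \<longrightarrow> e < a (n - 1)) \<and> basic_nbhd n A a e \<subseteq> \<Union>K)"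
  proof (intro conjI ballI)
    show "\<Union>K \<subseteq> Xn n" using K by blast
    fix a assume "a \<in> \<Union>K"
    then obtain U where "U \<in> K" "a \<in> U" by blast
    with K obtain e where "e>0" "(a \<in> Pn n \<longrightarrow> e < a (n - 1))" "basic_nbhd n A a e \<subseteq> U" by blast
    then show "\<exists>e>0. (a \<in> Pn n \<longrightarrow> e < a (n - 1)) \<and> basic_nbhd n A a e \<subseteq> \<Union>K"
      using \<open>U \<in> K\<close> by blast
  qed
qed

lemma openin_tauA: assumes "n \<ge> 1"
  shows "openin (tauA n A) U \<longleftrightarrow> U \<subseteq> Xn n \<and>
      (\<forall>a\<in>U. \<exists>e>0. (a \<in> Pn n \<longrightarrow> e < a (n - 1)) \<and> basic_nbhd n A a e \<subseteq> U)"
  unfolding tauA_def using istop_tauA[OF assms] by simp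

lemma istop_eucl: "istopology (\<lambda>U. U \<subseteq> Rn n \<and> (\<forall>a\<in>U. \<exists>e>0. eball n a e \<subseteq> U))"
proof (rule istopI)
  fix S T assume S: "S \<subseteq> Rn n \<and> (\<forall>a\<in>S. \<exists>e>0. eball n a e \<subseteq> S)"
    and T: "T \<subseteq> Rn n \<and> (\<forall>a\<in>T. \<exists>e>0. eball n a e \<subseteq> T)"
  show "S \<inter> T \<subseteq> Rn n \<and> (\<forall>a\<in>S \<inter> T. \<exists>e>0. eball n a e \<subseteq> S \<inter> T)"
  proof (intro conjI ballI)
    show "S \<inter> T \<subseteq> Rn n" using S by auto
    fix a assume a: "a \<in> S \<inter> T"
    obtain e1 where e1: "e1 > 0" "eball n a e1 \<subseteq> S" using S a by blast
    obtain e2 where e2: "e2 > 0" "eball n a e2 \<subseteq> T" using T a by blast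
    show "\<exists>e>0. eball n a e \<subseteq> S \<inter> T"
      using e1 e2 eball_mono[of "min e1 e2" e1 n a] eball_mono[of "min e1 e2" e2 n a]
      by (intro exI[of _ "min e1 e2"]) auto
  qed
next
  fix K :: "(nat \<Rightarrow> real) set set"
  assume K: "\<forall>U\<in>K. U \<subseteq> Rn n \<and> (\<forall>a\<in>U. \<exists>e>0. eball n a e \<subseteq> U)"
  show "\<Union>K \<subseteq> Rn n \<and> (\<forall>a\<in>\<Union>K. \<exists>e>0. eball n a e \<subseteq> \<Union>K)"
  proof (intro conjI ballI)
    show "\<Union>K \<subseteq> Rn n" using K by blast
    fix a assume "a \<in> \<Union>K"
    then obtain U where "U \<in> K" "a \<in> U" by blast
    with K obtain e where "e>0" "eball n a e \<subseteq> U" by blast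
    then show "\<exists>e>0. eball n a e \<subseteq> \<Union>K" using \<open>U \<in> K\<close> by blast
  qed
qed

lemma openin_eucl: "openin (euclRn n) U \<longleftrightarrow> U \<subseteq> Rn n \<and> (\<forall>a\<in>U. \<exists>e>0. eball n a e \<subseteq> U)"
  unfolding euclRn_def using istop_eucl by simp

lemma open_lift:
  assumes n: "n \<ge> 1" and V: "V \<subseteq> Ln n" and hV: "\<forall>a\<in>V\<inter>A. \<exists>e>0. eball n a e \<inter> Ln n \<subseteq> V"
  shows "openin (tauA n A) (V \<union> Pn n)"
  unfolding openin_tauA[OF n]
proof (intro conjI ballI)
  show "V \<union> Pn n \<subseteq> Xn n" using V by (auto simp: Xn_def)
  fix a assume a: "a \<in> V \<union> Pn n"
  show "\<exists>e>0. (a \<in> Pn n \<longrightarrow> e < a (n - 1)) \<and> basic_nbhd n A a e \<subseteq> V \<union> Pn n"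
  proof (cases "a \<in> Pn n")
    case True
    then have "a (n-1) > 0" by (simp add: Pn_def)
    then show ?thesis using True eball_Pn[OF n True, of "a (n-1)/2"]
      by (intro exI[of _ "a (n-1)/2"]) (auto simp: basic_nbhd_def)
  next
    case False
    then have aV: "a \<in> V" using a by auto
    show ?thesis
    proof (cases "a \<in> A")
      case True
      then obtain e where e: "e > 0" "eball n a e \<inter> Ln n \<subseteq> V" using hV aV by blast
      then show ?thesis using False True
        by (intro exI[of _ e]) (auto simp: basic_nbhd_def Xn_def)
    next
      case F2: False
      have "eball n (aeps n a 1) 1 \<subseteq> Pn n" by (rule eball_aeps_Pn) (use n in auto)
      then show ?thesis using False F2 aV
        by (intro exI[of _ 1]) (auto simp: basic_nbhd_def tball_def)
    qed
  qed
qed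

lemma open_lift_sub:
  assumes n: "n \<ge> 1" and V: "V \<subseteq> Ln n" and hV: "\<forall>a\<in>V\<inter>A. \<exists>e>0. eball n a e \<inter> Ln n \<subseteq> V"
  shows "openin (subtopology (tauA n A) (Ln n)) V"
proof -
  have "V = (V \<union> Pn n) \<inter> Ln n" using V Ln_Pn_disj[of n] by blast
  then show ?thesis unfolding openin_subtopology using open_lift[OF assms] by blast
qed

lemma topspace_tauA_Ln: assumes n: "n \<ge> 1" shows "topspace (subtopology (tauA n A) (Ln n)) = Ln n"
proof -
  have "openin (tauA n A) (Ln n \<union> Pn n)"
  proof (rule open_lift[OF n])
    show "\<forall>a\<in>Ln n \<inter> A. \<exists>e>0. eball n a e \<inter> Ln n \<subseteq> Ln n"
      using zero_less_one by blast
  qed simp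
  then have "Ln n \<union> Pn n \<subseteq> topspace (tauA n A)"
    by (rule openin_subset)
  moreover have "topspace (tauA n A) \<subseteq> Xn n"
  proof
    fix x assume "x \<in> topspace (tauA n A)"
    then obtain S where "openin (tauA n A) S" "x \<in> S" unfolding topspace_def by blast
    then show "x \<in> Xn n" using openin_tauA[OF n, of A S] by blast
  qed
  ultimately have "topspace (tauA n A) = Xn n" unfolding Xn_def by blast
  then show ?thesis unfolding topspace_subtopology Xn_def by blast
qed

lemma open_restrict:
  assumes n: "n \<ge> 1" and u: "openin (subtopology (tauA n A) (Ln n)) u" and a: "a \<in> u" "a \<in> A"
  shows "\<exists>e>0. eball n a e \<inter> Ln n \<subseteq> u"
proof -
  obtain T where T: "openin (tauA n A) T" "u = T \<inter> Ln n" using u unfolding openin_subtopology by auto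
  have aT: "a \<in> T" and aL: "a \<in> Ln n" using T a by auto
  then have aP: "a \<notin> Pn n" using Ln_Pn_disj by blast
  have "\<forall>a\<in>T. \<exists>e>0. (a \<in> Pn n \<longrightarrow> e < a (n - 1)) \<and> basic_nbhd n A a e \<subseteq> T"
    using T(1) openin_tauA[OF n] by simp
  then obtain e where e: "e > 0" "basic_nbhd n A a e \<subseteq> T"
    using aT by meson
  have "basic_nbhd n A a e = eball n a e \<inter> Xn n" using aP a by (simp add: basic_nbhd_def)
  then have "eball n a e \<inter> Ln n \<subseteq> u" using e(2) T(2) unfolding Xn_def by blast
  then show ?thesis using e(1) by blast
qed

lemma topspace_eucl: "topspace (euclRn n) = Rn n"
proof
  show "topspace (euclRn n) \<subseteq> Rn n"
  proof
    fix x assume "x \<in> topspace (euclRn n)"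
    then obtain S where "openin (euclRn n) S" "x \<in> S" unfolding topspace_def by blast
    then show "x \<in> Rn n" unfolding openin_eucl by blast
  qed
  have "openin (euclRn n) (Rn n)" unfolding openin_eucl
    by (auto simp: eball_def intro!: exI[of _ 1])
  then show "Rn n \<subseteq> topspace (euclRn n)" by (rule openin_subset)
qed

lemma closedin_tauE_Ln:
  "closedin (subtopology (tauE n) (Ln n)) C \<longleftrightarrow> C \<subseteq> Ln n \<and> openin (subtopology (euclRn n) (Ln n)) (Ln n - C)"
proof -
  have "Xn n \<inter> Ln n = Ln n" unfolding Xn_def by blast
  then have eq: "subtopology (tauE n) (Ln n) = subtopology (euclRn n) (Ln n)"
    unfolding tauE_def subtopology_subtopology by simp
  have "Rn n \<inter> Ln n = Ln n" unfolding Ln_def by blast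
  then have "topspace (subtopology (euclRn n) (Ln n)) = Ln n"
    unfolding topspace_subtopology topspace_eucl by simp
  then show ?thesis unfolding eq closedin_def by simp
qed

definition Qn :: "nat \<Rightarrow> (nat \<Rightarrow> real) set" where
  "Qn n = {q \<in> Rn n. \<forall>i<n. q i \<in> \<rat>}"

lemma countable_Qn: "countable (Qn n)"
proof -
  let ?F = "\<lambda>l i. if i < length l then l ! i else (0::real)"
  have "Qn n \<subseteq> ?F ` lists \<rat>"
  proof
    fix q assume q: "q \<in> Qn n"
    let ?l = "map q [0..<n]"
    have "?l \<in> lists \<rat>" using q by (auto simp: Qn_def)
    moreover have "q = ?F ?l"
    proof
      fix i show "q i = ?F ?l i" using q by (auto simp: Qn_def Rn_def)
    qed
    ultimately show "q \<in> ?F ` lists \<rat>" by blast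
  qed
  moreover have "countable (?F ` lists \<rat>)"
    using countable_rat by (intro countable_image countable_lists)
  ultimately show ?thesis by (rule countable_subset)
qed

lemma dense_Qn:
  assumes x: "x \<in> Rn n" and d: "\<delta> > 0" shows "\<exists>q\<in>Qn n. edist n q x < \<delta>"
proof -
  define d where "d = \<delta> / (real n + 1)"
  have dpos: "d > 0" using d by (simp add: d_def)
  have "\<forall>i. \<exists>r\<in>\<rat>. x i - d < r \<and> r < x i + d"
  proof
    fix i
    have "x i - d < x i + d" using dpos by simp
    from Rats_dense_in_real[OF this] show "\<exists>r\<in>\<rat>. x i - d < r \<and> r < x i + d" .
  qed
  then obtain f where f: "\<forall>i. f i \<in> \<rat> \<and> x i - d < f i \<and> f i < x i + d"
    using bchoice[of UNIV] by (metis UNIV_I)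
  define q where "q = (\<lambda>i. if i < n then f i else 0)"
  have qQ: "q \<in> Qn n" using f by (auto simp: q_def Qn_def Rn_def)
  have "edist n q x \<le> (\<Sum>i<n. \<bar>q i - x i\<bar>)"
    unfolding edist_L2 by (rule L2_set_le_sum_abs)
  also have "\<dots> \<le> (\<Sum>i<n. d)"
  proof (rule sum_mono)
    fix i assume "i \<in> {..<n}"
    then show "\<bar>q i - x i\<bar> \<le> d" using f[rule_format, of i] by (auto simp: q_def)
  qed
  also have "\<dots> = real n * d" by simp
  also have "\<dots> < \<delta>"
  proof -
    have "real n * d = \<delta> * (real n / (real n + 1))" by (simp add: d_def)
    also have "\<dots> < \<delta> * 1" using d by (intro mult_strict_left_mono) auto
    finally show ?thesis by simp
  qed
  finally show ?thesis using qQ by blast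
qed

lemma dir1:
  assumes n: "n \<ge> 1" and L: "Lindelof_space (subtopology (tauA n A) (Ln n))"
    and C: "C \<subseteq> Ln n - A" "closedin (subtopology (tauE n) (Ln n)) C"
  shows "countable C"
proof -
  let ?X = "subtopology (tauA n A) (Ln n)"
  have CL: "C \<subseteq> Ln n" using C by blast
  have oc: "openin (subtopology (euclRn n) (Ln n)) (Ln n - C)"
    using C(2) closedin_tauE_Ln by blast
  then obtain T where T: "openin (euclRn n) T" "Ln n - C = T \<inter> Ln n"
    unfolding openin_subtopology by auto
  let ?U = "insert (Ln n - C) ((\<lambda>c. {c}) ` C)"
  have o1: "openin ?X (Ln n - C)"
  proof (rule open_lift_sub[OF n])
    show "\<forall>a\<in>(Ln n - C) \<inter> A. \<exists>e>0. eball n a e \<inter> Ln n \<subseteq> Ln n - C"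
    proof
      fix a assume "a \<in> (Ln n - C) \<inter> A"
      then have "a \<in> T" using T(2) by blast
      then obtain e where "e > 0" "eball n a e \<subseteq> T" using T(1) unfolding openin_eucl by blast
      then show "\<exists>e>0. eball n a e \<inter> Ln n \<subseteq> Ln n - C" using T(2) by blast
    qed
  qed simp
  have o2: "openin ?X {c}" if "c \<in> C" for c
  proof (rule open_lift_sub[OF n])
    show "{c} \<subseteq> Ln n" using that CL by blast
    show "\<forall>a\<in>{c} \<inter> A. \<exists>e>0. eball n a e \<inter> Ln n \<subseteq> {c}" using that C(1) by blast
  qed
  have "\<forall>U\<in>?U. openin ?X U" using o1 o2 by blast
  moreover have "\<Union>?U = topspace ?X" unfolding topspace_tauA_Ln[OF n] using CL by blast
  ultimately obtain V where V: "countable V" "V \<subseteq> ?U" "\<Union>V = topspace ?X"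
    using L unfolding Lindelof_space_def by meson
  have "(\<lambda>c. {c}) ` C \<subseteq> V"
  proof
    fix s assume "s \<in> (\<lambda>c. {c}) ` C"
    then obtain c where c: "c \<in> C" "s = {c}" by blast
    then have "c \<in> \<Union>V" unfolding V(3) topspace_tauA_Ln[OF n] using CL by blast
    then obtain v where v: "v \<in> V" "c \<in> v" by blast
    then have "v \<in> ?U" using V(2) by blast
    then have "v = {c}" using v(2) c(1) by blast
    then show "s \<in> V" using v c by simp
  qed
  then have "countable ((\<lambda>c. {c}) ` C)" using V(1) countable_subset by blast
  then have "countable (the_elem ` (\<lambda>c. {c}) ` C)" by (rule countable_image)
  moreover have "the_elem ` (\<lambda>c. {c}) ` C = C" by (simp add: image_image)
  ultimately show ?thesis by simp
qed

lemma dir2: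
  assumes n: "n \<ge> 1" and AL: "A \<subseteq> Ln n"
    and noC: "\<And>C. C \<subseteq> Ln n - A \<Longrightarrow> closedin (subtopology (tauE n) (Ln n)) C \<Longrightarrow> countable C"
  shows "Lindelof_space (subtopology (tauA n A) (Ln n))"
  unfolding Lindelof_space_def
proof (intro allI impI)
  let ?X = "subtopology (tauA n A) (Ln n)"
  fix \<U> assume cov: "(\<forall>U\<in>\<U>. openin ?X U) \<and> \<Union>\<U> = topspace ?X"
  then have covL: "\<Union>\<U> = Ln n" and opU: "\<forall>U\<in>\<U>. openin ?X U"
    using topspace_tauA_Ln[OF n] by auto
  have "\<forall>a\<in>A. \<exists>U. U \<in> \<U> \<and> (\<exists>e. e > 0 \<and> eball n a e \<inter> Ln n \<subseteq> U)"
  proof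
    fix a assume a: "a \<in> A"
    then have "a \<in> \<Union>\<U>" using AL covL by blast
    then obtain U where U: "U \<in> \<U>" "a \<in> U" by blast
    then have "\<exists>e>0. eball n a e \<inter> Ln n \<subseteq> U" using open_restrict[OF n] opU a by blast
    then show "\<exists>U. U \<in> \<U> \<and> (\<exists>e. e > 0 \<and> eball n a e \<inter> Ln n \<subseteq> U)" using U by blast
  qed
  then obtain Uf where Uf: "\<forall>a\<in>A. Uf a \<in> \<U> \<and> (\<exists>e. e > 0 \<and> eball n a e \<inter> Ln n \<subseteq> Uf a)"
    using bchoice by meson
  then obtain Ef where Ef: "\<forall>a\<in>A. Ef a > 0 \<and> eball n a (Ef a) \<inter> Ln n \<subseteq> Uf a"
    using bchoice[of A "\<lambda>a e. e > 0 \<and> eball n a e \<inter> Ln n \<subseteq> Uf a"] by blast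
  define P where "P = (\<lambda>q r a. a \<in> A \<and> a \<in> eball n q r \<and> eball n q r \<subseteq> eball n a (Ef a))"
  define S where "S = {(q, r). q \<in> Qn n \<and> r \<in> \<rat> \<and> (\<exists>a. P q r a)}"
  define g where "g = (\<lambda>(q, r). SOME a. P q r a)"
  have gP: "P q r (g (q, r))" if "(q, r) \<in> S" for q r
  proof -
    have "\<exists>a. P q r a" using that by (simp add: S_def)
    then show ?thesis unfolding g_def by (simp add: someI_ex)
  qed
  define A' where "A' = g ` S"
  have cS: "countable S"
  proof -
    have "S \<subseteq> Qn n \<times> \<rat>" by (auto simp: S_def)
    moreover have "countable (Qn n \<times> \<rat>)" using countable_Qn countable_rat by blast
    ultimately show ?thesis using countable_subset by blast
  qed
  then have cA': "countable A'" unfolding A'_def by simp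
  have A'A: "A' \<subseteq> A"
  proof
    fix a assume "a \<in> A'"
    then obtain q r where "(q, r) \<in> S" "a = g (q, r)" unfolding A'_def by auto
    then show "a \<in> A" using gP P_def by blast
  qed
  define T where "T = (\<Union>a\<in>A'. eball n a (Ef a))"
  define W where "W = T \<inter> Ln n"
  have AW: "A \<subseteq> W"
  proof
    fix a assume a: "a \<in> A"
    define e where "e = Ef a"
    have e: "e > 0" using Ef a by (simp add: e_def)
    have aR: "a \<in> Rn n" and aL: "a \<in> Ln n" using a AL by (auto simp: Ln_def)
    obtain q where q: "q \<in> Qn n" "edist n q a < e/4" using dense_Qn[OF aR, of "e/4"] e by auto
    have "e/4 < e/2" using e by simp
    from Rats_dense_in_real[OF this] obtain r where r: "r \<in> \<rat>" "e/4 < r" "r < e/2" by blast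
    have "a \<in> eball n q r" using aR q r edist_sym[of n a q] by (simp add: eball_def)
    moreover have "eball n q r \<subseteq> eball n a e"
    proof
      fix y assume "y \<in> eball n q r"
      then have "y \<in> Rn n" "edist n y q < r" by (auto simp: eball_def)
      moreover have "edist n y a \<le> edist n y q + edist n q a" by (rule edist_triangle)
      ultimately show "y \<in> eball n a e" using q r by (simp add: eball_def)
    qed
    ultimately have "P q r a" using a by (simp add: P_def e_def)
    then have qrS: "(q, r) \<in> S" using q r by (auto simp: S_def)
    then have "P q r (g (q, r))" by (rule gP)
    then have "a \<in> eball n (g (q, r)) (Ef (g (q, r)))" using \<open>a \<in> eball n q r\<close> by (auto simp: P_def)
    moreover have "g (q, r) \<in> A'" using qrS by (simp add: A'_def)
    ultimately show "a \<in> W" using aL by (auto simp: W_def T_def)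
  qed
  define C where "C = Ln n - W"
  have WL: "W \<subseteq> Ln n" by (simp add: W_def)
  have "openin (euclRn n) T"
    unfolding openin_eucl
  proof (intro conjI ballI)
    show "T \<subseteq> Rn n" by (auto simp: T_def eball_def)
    fix x assume "x \<in> T"
    then obtain a where "a \<in> A'" "x \<in> eball n a (Ef a)" by (auto simp: T_def)
    then obtain d where "d > 0" "eball n x d \<subseteq> eball n a (Ef a)" using eball_open_pt by blast
    then show "\<exists>e>0. eball n x e \<subseteq> T" using \<open>a \<in> A'\<close> by (auto simp: T_def)
  qed
  then have "openin (subtopology (euclRn n) (Ln n)) W"
    unfolding openin_subtopology W_def by blast
  moreover have "Ln n - C = W" using WL by (auto simp: C_def)
  ultimately have "closedin (subtopology (tauE n) (Ln n)) C"
    unfolding closedin_tauE_Ln by (simp add: C_def)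
  moreover have "C \<subseteq> Ln n - A" using AW by (auto simp: C_def)
  ultimately have cC: "countable C" using noC by blast
  have "\<forall>c\<in>C. \<exists>U. U \<in> \<U> \<and> c \<in> U" using covL by (auto simp: C_def)
  then obtain h where h: "\<forall>c\<in>C. h c \<in> \<U> \<and> c \<in> h c" using bchoice by meson
  define V where "V = Uf ` A' \<union> h ` C"
  show "\<exists>\<V>. countable \<V> \<and> \<V> \<subseteq> \<U> \<and> \<Union>\<V> = topspace ?X"
  proof (intro exI conjI)
    show "countable V" using cA' cC by (simp add: V_def)
    show "V \<subseteq> \<U>" using Uf h A'A by (auto simp: V_def)
    then have "\<Union>V \<subseteq> Ln n" using covL by blast
    moreover have "Ln n \<subseteq> \<Union>V"
    proof
      fix x assume x: "x \<in> Ln n"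
      show "x \<in> \<Union>V"
      proof (cases "x \<in> W")
        case True
        then obtain a where a: "a \<in> A'" "x \<in> eball n a (Ef a)" by (auto simp: W_def T_def)
        then have "x \<in> Uf a" using Ef A'A x by blast
        then show ?thesis using a(1) by (auto simp: V_def)
      next
        case False
        then have "x \<in> C" using x by (simp add: C_def)
        then show ?thesis using h by (auto simp: V_def)
      qed
    qed
    ultimately show "\<Union>V = topspace ?X" using topspace_tauA_Ln[OF n] by blast
  qed
qed

theorem mainTheorem11:
  fixes n :: nat and A :: "(nat \<Rightarrow> real) set"
  assumes "n \<ge> 2" and "A \<subseteq> Ln n"
  shows "Lindelof_space (subtopology (tauA n A) (Ln n)) \<longleftrightarrow>
         \<not> (\<exists>C. C \<subseteq> Ln n - A \<and> closedin (subtopology (tauE n) (Ln n)) C \<and> uncountable C)"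
proof -
  have n: "n \<ge> 1" using assms(1) by simp
  show ?thesis
  proof
    assume "Lindelof_space (subtopology (tauA n A) (Ln n))"
    then show "\<not> (\<exists>C. C \<subseteq> Ln n - A \<and> closedin (subtopology (tauE n) (Ln n)) C \<and> uncountable C)"
      using dir1[OF n] by blast
  next
    assume "\<not> (\<exists>C. C \<subseteq> Ln n - A \<and> closedin (subtopology (tauE n) (Ln n)) C \<and> uncountable C)"
    then show "Lindelof_space (subtopology (tauA n A) (Ln n))"
      using dir2[OF n assms(2)] by blast
  qed
qed

end
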